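(* Let $X$ and $Y$ be Tychonoff spaces with $Y$ a $P$-space, and let $f:X\to Y$ be a meshing map which has a cross section. Then $f|_{N(X)}$ is a homeomorphism of $N(X)$ onto $N(Y)$.
   Context: A space $X$ is Menger if for each sequence $(\mathcal{U}_n)$ of open covers of $X$ there is a sequence $(\mathcal{V}_n)$ with each $\mathcal{V}_n$ a finite subset of $\mathcal{U}_n$ and $\bigcup_{n}\bigcup\mathcal{V}_n=X$. $X$ is locally Menger at $x$ if there are an open set $U$ and a Menger subspace $M$ of $X$ with $x\in U\subseteq M$; $N(X)$ denotes the set of points of $X$ at which $X$ is not locally Menger. A $P$-space is a space in which every countable intersection of open sets is open. A continuous surjection $f:X\to Y$ is a meshing map if there are compactifications $bX$ of $X$ and $cY$ of $Y$ and a continuous extension $\tilde f:bX\to cY$ of $f$ onto $cY$ such that $\tilde f|_{bX\setminus X}$ is a homeomorphism onto $cY\setminus Y$. A cross section of $f$ is a continuous map $g:Y\to X$ with $f\circ g=\mathrm{id}_Y$. *)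

theory Defs
  imports "HOL-Analysis.Analysis"
begin

definition tychonoff_space :: "'a topology \<Rightarrow> bool" where
  "tychonoff_space X \<longleftrightarrow> completely_regular_space X \<and> Hausdorff_space X"

definition menger_space :: "'a topology \<Rightarrow> bool" where
  "menger_space X \<longleftrightarrow>
     (\<forall>\<U> :: nat \<Rightarrow> 'a set set.
        (\<forall>n. (\<forall>U\<in>\<U> n. openin X U) \<and> topspace X \<subseteq> \<Union>(\<U> n)) \<longrightarrow>
        (\<exists>\<V> :: nat \<Rightarrow> 'a set set. (\<forall>n. finite (\<V> n) \<and> \<V> n \<subseteq> \<U> n) \<and>
            topspace X \<subseteq> (\<Union>n. \<Union>(\<V> n))))"

definition locally_menger_at :: "'a topology \<Rightarrow> 'a \<Rightarrow> bool" where
  "locally_menger_at X x \<longleftrightarrow>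
     (\<exists>U M. openin X U \<and> x \<in> U \<and> U \<subseteq> M \<and> M \<subseteq> topspace X \<and>
            menger_space (subtopology X M))"

definition non_locally_menger :: "'a topology \<Rightarrow> 'a set" where
  "non_locally_menger X = {x \<in> topspace X. \<not> locally_menger_at X x}"

definition P_space :: "'a topology \<Rightarrow> bool" where
  "P_space X \<longleftrightarrow>
     (\<forall>\<U>. countable \<U> \<and> (\<forall>U\<in>\<U>. openin X U) \<longrightarrow> openin X (topspace X \<inter> \<Inter>\<U>))"

definition compactification :: "'a topology \<Rightarrow> 'c topology \<Rightarrow> ('a \<Rightarrow> 'c) \<Rightarrow> bool" where
  "compactification X K e \<longleftrightarrow>
     compact_space K \<and> Hausdorff_space K \<and> embedding_map X K e \<and>
     K closure_of (e ` topspace X) = topspace K"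

text \<open>Witness data for f being a meshing map: compactifications (BX,eX), (CY,eY)
  and a continuous extension F of f onto CY which maps the remainder of BX
  homeomorphically onto the remainder of CY.\<close>
definition meshing_data ::
  "'a topology \<Rightarrow> 'b topology \<Rightarrow> ('a \<Rightarrow> 'b) \<Rightarrow>
   'c topology \<Rightarrow> ('a \<Rightarrow> 'c) \<Rightarrow> 'd topology \<Rightarrow> ('b \<Rightarrow> 'd) \<Rightarrow> ('c \<Rightarrow> 'd) \<Rightarrow> bool" where
  "meshing_data X Y f BX eX CY eY F \<longleftrightarrow>
     continuous_map X Y f \<and> f ` topspace X = topspace Y \<and>
     compactification X BX eX \<and> compactification Y CY eY \<and>
     continuous_map BX CY F \<and> F ` topspace BX = topspace CY \<and>
     (\<forall>x\<in>topspace X. F (eX x) = eY (f x)) \<and>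
     homeomorphic_map (subtopology BX (topspace BX - eX ` topspace X))
                      (subtopology CY (topspace CY - eY ` topspace Y)) F"

definition cross_section :: "'a topology \<Rightarrow> 'b topology \<Rightarrow> ('a \<Rightarrow> 'b) \<Rightarrow> ('b \<Rightarrow> 'a) \<Rightarrow> bool" where
  "cross_section X Y f g \<longleftrightarrow> continuous_map Y X g \<and> (\<forall>y\<in>topspace Y. f (g y) = y)"

end

theory Submission
  imports Defs
begin

lemma menger_spaceD:
  fixes \<U> :: "nat \<Rightarrow> 'a set set"
  assumes "menger_space X" "\<forall>n. (\<forall>U\<in>\<U> n. openin X U) \<and> topspace X \<subseteq> \<Union>(\<U> n)"
  shows "\<exists>\<V>. (\<forall>n. finite (\<V> n) \<and> \<V> n \<subseteq> \<U> n) \<and> topspace X \<subseteq> (\<Union>n. \<Union>(\<V> n))"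
  using mp[OF spec[OF assms(1)[unfolded menger_space_def], of \<U>] assms(2)] .

lemma compact_menger:
  assumes "compact_space X" shows "menger_space X"
  unfolding menger_space_def
proof (intro allI impI)
  fix \<U> :: "nat \<Rightarrow> 'a set set"
  assume H: "\<forall>n. (\<forall>U\<in>\<U> n. openin X U) \<and> topspace X \<subseteq> \<Union>(\<U> n)"
  have "\<forall>n. \<exists>V. finite V \<and> V \<subseteq> \<U> n \<and> topspace X \<subseteq> \<Union>V"
  proof
    fix n
    have cpt: "compactin X (topspace X)" using assms unfolding compact_space_def .
    have op: "\<forall>U\<in>\<U> n. openin X U" and cov: "topspace X \<subseteq> \<Union>(\<U> n)" using H by blast+
    show "\<exists>V. finite V \<and> V \<subseteq> \<U> n \<and> topspace X \<subseteq> \<Union>V"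
      using mp[OF spec[OF conjunct2[OF cpt[unfolded compactin_def]], of "\<U> n"] conjI[OF op cov]] .
  qed
  from choice[OF this] obtain V where V: "\<forall>n. finite (V n) \<and> V n \<subseteq> \<U> n \<and> topspace X \<subseteq> \<Union>(V n)"
    by (elim exE)
  show "\<exists>\<V>. (\<forall>n. finite (\<V> n) \<and> \<V> n \<subseteq> \<U> n) \<and> topspace X \<subseteq> (\<Union>n. \<Union>(\<V> n))"
  proof (rule exI[of _ V], intro conjI allI)
    fix n show "finite (V n)" "V n \<subseteq> \<U> n" using V by simp_all
  next
    have "topspace X \<subseteq> \<Union>(V 0)" using V by simp
    also have "\<dots> \<subseteq> (\<Union>n. \<Union>(V n))" by (rule UN_upper) simp
    finally show "topspace X \<subseteq> (\<Union>n. \<Union>(V n))" .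
  qed
qed

lemma menger_image:
  assumes f: "continuous_map X Y f" and s: "f ` topspace X = topspace Y" and M: "menger_space X"
  shows "menger_space Y"
  unfolding menger_space_def
proof (intro allI impI)
  fix \<U> :: "nat \<Rightarrow> 'b set set"
  assume H: "\<forall>n. (\<forall>U\<in>\<U> n. openin Y U) \<and> topspace Y \<subseteq> \<Union>(\<U> n)"
  define \<U>' where "\<U>' n = (\<lambda>U. {x \<in> topspace X. f x \<in> U}) ` \<U> n" for n
  have "\<forall>n. (\<forall>U\<in>\<U>' n. openin X U) \<and> topspace X \<subseteq> \<Union>(\<U>' n)"
  proof
    fix n
    show "(\<forall>U\<in>\<U>' n. openin X U) \<and> topspace X \<subseteq> \<Union>(\<U>' n)"
    proof
      show "\<forall>U\<in>\<U>' n. openin X U"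
        using H f unfolding \<U>'_def by (auto intro: openin_continuous_map_preimage)
      show "topspace X \<subseteq> \<Union>(\<U>' n)"
      proof
        fix x assume x: "x \<in> topspace X"
        then have "f x \<in> topspace Y" using s by blast
        then obtain U where "U \<in> \<U> n" "f x \<in> U" using H by blast
        then show "x \<in> \<Union>(\<U>' n)" using x unfolding \<U>'_def by blast
      qed
    qed
  qed
  from menger_spaceD[OF M this] obtain \<V> where V: "\<forall>n. finite (\<V> n) \<and> \<V> n \<subseteq> \<U>' n" "topspace X \<subseteq> (\<Union>n. \<Union>(\<V> n))"
    by blast
  have "\<forall>n. \<exists>C. finite C \<and> C \<subseteq> \<U> n \<and> \<V> n = (\<lambda>U. {x \<in> topspace X. f x \<in> U}) ` C"
  proof
    fix n
    show "\<exists>C. finite C \<and> C \<subseteq> \<U> n \<and> \<V> n = (\<lambda>U. {x \<in> topspace X. f x \<in> U}) ` C"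
    proof -
      have fin: "finite (\<V> n)" and sub: "\<V> n \<subseteq> (\<lambda>U. {x \<in> topspace X. f x \<in> U}) ` \<U> n"
        using V(1) unfolding \<U>'_def by simp_all
      from finite_subset_image[OF fin sub] show ?thesis by (elim exE conjE) (intro exI conjI)
    qed
  qed
  from choice[OF this] obtain C where C0: "\<forall>n. finite (C n) \<and> C n \<subseteq> \<U> n \<and> \<V> n = (\<lambda>U. {x \<in> topspace X. f x \<in> U}) ` C n"
    by (elim exE)
  have C: "\<And>n. finite (C n) \<and> C n \<subseteq> \<U> n \<and> \<V> n = (\<lambda>U. {x \<in> topspace X. f x \<in> U}) ` C n"
    using C0 by (rule spec)
  have cov: "topspace Y \<subseteq> (\<Union>n. \<Union>(C n))"
  proof
    fix y assume "y \<in> topspace Y"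
    then obtain x where x: "x \<in> topspace X" "y = f x" using s by auto
    then obtain n V where nV: "V \<in> \<V> n" "x \<in> V" using V(2) by blast
    then obtain U where U: "U \<in> C n" "V = {x \<in> topspace X. f x \<in> U}" using C[of n] by auto
    then have "y \<in> \<Union>(C n)" using x nV by auto
    then show "y \<in> (\<Union>n. \<Union>(C n))" by (rule UN_I[OF UNIV_I])
  qed
  have fs: "\<forall>n. finite (C n) \<and> C n \<subseteq> \<U> n" using C by simp
  show "\<exists>\<V>. (\<forall>n. finite (\<V> n) \<and> \<V> n \<subseteq> \<U> n) \<and> topspace Y \<subseteq> (\<Union>n. \<Union>(\<V> n))"
    by (rule exI[of _ C], rule conjI, fact fs, fact cov)
qed

lemma menger_proper_preimage:
  assumes f: "proper_map X Y f" and M: "menger_space Y"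
  shows "menger_space X"
  unfolding menger_space_def
proof (intro allI impI)
  fix \<U> :: "nat \<Rightarrow> 'a set set"
  assume H: "\<forall>n. (\<forall>U\<in>\<U> n. openin X U) \<and> topspace X \<subseteq> \<Union>(\<U> n)"
  have fY: "\<And>x. x \<in> topspace X \<Longrightarrow> f x \<in> topspace Y"
    using proper_map_imp_subset_topspace[OF f] by (simp add: Pi_iff)
  have cm: "closed_map X Y f" using proper_imp_closed_map[OF f] .
  define w where "w S = topspace Y - f ` (topspace X - \<Union>S)" for S
  define \<W> where "\<W> n = w ` {S. finite S \<and> S \<subseteq> \<U> n}" for n
  have "\<forall>n. (\<forall>U\<in>\<W> n. openin Y U) \<and> topspace Y \<subseteq> \<Union>(\<W> n)"
  proof
    fix n
    have "openin Y (w S)" if "S \<subseteq> \<U> n" for S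
    proof -
      have "openin X (\<Union>S)" using H that by blast
      then have "closedin X (topspace X - \<Union>S)" by blast
      then have "closedin Y (f ` (topspace X - \<Union>S))" using cm unfolding closed_map_def by blast
      then show ?thesis unfolding w_def by blast
    qed
    moreover have "y \<in> \<Union>(\<W> n)" if y: "y \<in> topspace Y" for y
    proof -
      have cpt: "compactin X {x \<in> topspace X. f x = y}" using f y unfolding proper_map_def by blast
      have op: "\<forall>U\<in>\<U> n. openin X U" and cov: "{x \<in> topspace X. f x = y} \<subseteq> \<Union>(\<U> n)" using H by blast+
      have "\<exists>S. finite S \<and> S \<subseteq> \<U> n \<and> {x \<in> topspace X. f x = y} \<subseteq> \<Union>S"
        using mp[OF spec[OF conjunct2[OF cpt[unfolded compactin_def]], of "\<U> n"] conjI[OF op cov]] .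
      then obtain S where S: "finite S" "S \<subseteq> \<U> n" "{x \<in> topspace X. f x = y} \<subseteq> \<Union>S"
        by blast
      then have "y \<in> w S" using y unfolding w_def by auto
      then show ?thesis using S unfolding \<W>_def by blast
    qed
    ultimately show "(\<forall>U\<in>\<W> n. openin Y U) \<and> topspace Y \<subseteq> \<Union>(\<W> n)"
      unfolding \<W>_def by blast
  qed
  from menger_spaceD[OF M this] obtain \<V> where V: "\<forall>n. finite (\<V> n) \<and> \<V> n \<subseteq> \<W> n" "topspace Y \<subseteq> (\<Union>n. \<Union>(\<V> n))"
    by blast
  have "\<forall>n. \<exists>C. finite C \<and> C \<subseteq> {S. finite S \<and> S \<subseteq> \<U> n} \<and> \<V> n = w ` C"
  proof
    fix n
    show "\<exists>C. finite C \<and> C \<subseteq> {S. finite S \<and> S \<subseteq> \<U> n} \<and> \<V> n = w ` C"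
    proof -
      have fin: "finite (\<V> n)" and sub: "\<V> n \<subseteq> w ` {S. finite S \<and> S \<subseteq> \<U> n}"
        using V(1) unfolding \<W>_def by simp_all
      from finite_subset_image[OF fin sub] show ?thesis by (elim exE conjE) (intro exI conjI)
    qed
  qed
  from choice[OF this] obtain C where C0: "\<forall>n. finite (C n) \<and> C n \<subseteq> {S. finite S \<and> S \<subseteq> \<U> n} \<and> \<V> n = w ` C n"
    by (elim exE)
  have C: "\<And>n. finite (C n) \<and> C n \<subseteq> {S. finite S \<and> S \<subseteq> \<U> n} \<and> \<V> n = w ` C n"
    using C0 by (rule spec)
  have cov: "topspace X \<subseteq> (\<Union>n. \<Union>(\<Union>(C n)))"
  proof
    fix x assume x: "x \<in> topspace X"
    then obtain n V where "V \<in> \<V> n" "f x \<in> V" using V(2) fY by blast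
    then obtain S where "S \<in> C n" "f x \<in> w S" using C[of n] by auto
    then have "x \<in> \<Union>S" using x unfolding w_def by auto
    then have "x \<in> \<Union>(\<Union>(C n))" using \<open>S \<in> C n\<close> by blast
    then show "x \<in> (\<Union>n. \<Union>(\<Union>(C n)))" by (rule UN_I[OF UNIV_I])
  qed
  have fs: "\<forall>n. finite (\<Union>(C n)) \<and> \<Union>(C n) \<subseteq> \<U> n"
  proof
    fix n
    have "finite (C n)" "\<forall>S\<in>C n. finite S \<and> S \<subseteq> \<U> n" using C[of n] by auto
    then show "finite (\<Union>(C n)) \<and> \<Union>(C n) \<subseteq> \<U> n" by auto
  qed
  show "\<exists>\<V>. (\<forall>n. finite (\<V> n) \<and> \<V> n \<subseteq> \<U> n) \<and> topspace X \<subseteq> (\<Union>n. \<Union>(\<V> n))"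
    by (rule exI[of _ "\<lambda>n. \<Union>(C n)"], rule conjI, fact fs, fact cov)
qed

lemma embedding_closure:
  assumes e: "embedding_map X B e" and A: "closedin X A" and x: "x \<in> topspace X"
    and c: "e x \<in> B closure_of (e ` A)"
  shows "x \<in> A"
proof -
  have h: "homeomorphic_map X (subtopology B (e ` topspace X)) e" using e embedding_map_def by blast
  have "closedin (subtopology B (e ` topspace X)) (e ` A)"
    using homeomorphic_map_closedness[OF h] A closedin_subset by blast
  then obtain T where T: "closedin B T" "e ` A = T \<inter> e ` topspace X"
    by (meson closedin_subtopology)
  then have "B closure_of (e ` A) \<subseteq> T" by (simp add: closure_of_minimal)
  then have "e x \<in> e ` A" using c T x by blast
  then obtain a where a: "a \<in> A" "e x = e a" by auto
  have inj: "inj_on e (topspace X)" using homeomorphic_imp_injective_map[OF h] .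
  have aX: "a \<in> topspace X" using a(1) A closedin_subset by blast
  have "x = a" using inj_onD[OF inj a(2) x aX] .
  then show ?thesis using \<open>a \<in> A\<close> by simp
qed


theorem theorem5p17:
  fixes X :: "'a topology" and Y :: "'b topology" and f :: "'a \<Rightarrow> 'b"
    and BX :: "'c topology" and eX :: "'a \<Rightarrow> 'c"
    and CY :: "'d topology" and eY :: "'b \<Rightarrow> 'd" and F :: "'c \<Rightarrow> 'd"
  assumes "tychonoff_space X" and "tychonoff_space Y" and "P_space Y"
    and "meshing_data X Y f BX eX CY eY F"
    and "\<exists>g. cross_section X Y f g"
  shows "homeomorphic_map (subtopology X (non_locally_menger X))
                          (subtopology Y (non_locally_menger Y)) f"
proof -
  obtain g where gc: "continuous_map Y X g" and fg: "\<And>y. y \<in> topspace Y \<Longrightarrow> f (g y) = y"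
    using assms(5) unfolding cross_section_def by blast
  have HX: "Hausdorff_space X" using assms(1) unfolding tychonoff_space_def by blast
  note md = assms(4)[unfolded meshing_data_def]
  have fc: "continuous_map X Y f" using md by blast
  have fs: "f ` topspace X = topspace Y" using md by blast
  have cX: "compactification X BX eX" using md by blast
  have cY: "compactification Y CY eY" using md by blast
  have Fc: "continuous_map BX CY F" using md by blast
  have Fs: "F ` topspace BX = topspace CY" using md by blast
  have Fe: "\<And>x. x \<in> topspace X \<Longrightarrow> F (eX x) = eY (f x)" using md by blast
  have hR: "homeomorphic_map (subtopology BX (topspace BX - eX ` topspace X))
                      (subtopology CY (topspace CY - eY ` topspace Y)) F" using md by blast
  have BXc: "compact_space BX" and BXH: "Hausdorff_space BX" and eXe: "embedding_map X BX eX"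
    using cX unfolding compactification_def by blast+
  have CYc: "compact_space CY" and CYH: "Hausdorff_space CY" and eYe: "embedding_map Y CY eY"
    and CYd: "CY closure_of (eY ` topspace Y) = topspace CY"
    using cY unfolding compactification_def by blast+
  have hX: "homeomorphic_map X (subtopology BX (eX ` topspace X)) eX"
    using eXe unfolding embedding_map_def .
  have hY: "homeomorphic_map Y (subtopology CY (eY ` topspace Y)) eY"
    using eYe unfolding embedding_map_def .
  have eXc: "continuous_map X BX eX"
    using homeomorphic_imp_continuous_map[OF hX] continuous_map_in_subtopology by blast
  have eYc: "continuous_map Y CY eY"
    using homeomorphic_imp_continuous_map[OF hY] continuous_map_in_subtopology by blast
  have eXt: "\<And>x. x \<in> topspace X \<Longrightarrow> eX x \<in> topspace BX"
    using continuous_map_image_subset_topspace[OF eXc] by blast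
  have eYt: "\<And>y. y \<in> topspace Y \<Longrightarrow> eY y \<in> topspace CY"
    using continuous_map_image_subset_topspace[OF eYc] by blast
  have eYi: "inj_on eY (topspace Y)" using homeomorphic_imp_injective_map[OF hY] .
  have gt: "\<And>y. y \<in> topspace Y \<Longrightarrow> g y \<in> topspace X"
    using continuous_map_image_subset_topspace[OF gc] by blast
  have ft: "\<And>x. x \<in> topspace X \<Longrightarrow> f x \<in> topspace Y"
    using continuous_map_image_subset_topspace[OF fc] by blast
  have Ft: "\<And>c. c \<in> topspace BX \<Longrightarrow> F c \<in> topspace CY"
    using continuous_map_image_subset_topspace[OF Fc] by blast
  define RX where "RX = topspace BX - eX ` topspace X"
  define RY where "RY = topspace CY - eY ` topspace Y"
  have RXt: "topspace (subtopology BX RX) = RX" unfolding RX_def by auto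
  have RYt: "topspace (subtopology CY RY) = RY" unfolding RY_def by auto
  have FR: "F ` RX = RY"
    using homeomorphic_imp_surjective_map[OF hR] RXt RYt unfolding RX_def RY_def by simp
  have FRi: "inj_on F RX"
    using homeomorphic_imp_injective_map[OF hR] RXt unfolding RX_def by simp
  have F1: "\<And>c. c \<in> topspace BX \<Longrightarrow> F c \<in> eY ` topspace Y \<Longrightarrow> c \<in> eX ` topspace X"
  proof (rule ccontr)
    fix c assume c: "c \<in> topspace BX" "F c \<in> eY ` topspace Y" "c \<notin> eX ` topspace X"
    then have "c \<in> RX" unfolding RX_def by blast
    then have "F c \<in> RY" using FR by blast
    then show False using c(2) unfolding RY_def by blast
  qed
  have fcl: "closed_map X Y f"
    unfolding closed_map_def
  proof (intro allI impI)
    fix A assume A: "closedin X A"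
    have AX: "A \<subseteq> topspace X" using A closedin_subset by blast
    define CA where "CA = BX closure_of (eX ` A)"
    have "compactin BX CA"
      unfolding CA_def by (rule closedin_compact_space[OF BXc closedin_closure_of])
    then have "compactin CY (F ` CA)" using image_compactin Fc by blast
    then have clF: "closedin CY (F ` CA)" using compactin_imp_closedin CYH by blast
    have eq: "eY ` (f ` A) = F ` CA \<inter> eY ` topspace Y"
    proof
      show "eY ` f ` A \<subseteq> F ` CA \<inter> eY ` topspace Y"
      proof
        fix z assume "z \<in> eY ` f ` A"
        then obtain a where a: "a \<in> A" "z = eY (f a)" by blast
        have "eX a \<in> CA" unfolding CA_def
          using a AX eXt by (intro closure_of_subset[THEN subsetD]) auto
        moreover have "F (eX a) = z" using a AX Fe by auto
        ultimately have "z \<in> F ` CA" by (metis rev_image_eqI)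
        moreover have "z \<in> eY ` topspace Y" using a AX ft by blast
        ultimately show "z \<in> F ` CA \<inter> eY ` topspace Y" by blast
      qed
    next
      show "F ` CA \<inter> eY ` topspace Y \<subseteq> eY ` f ` A"
      proof
        fix z assume z: "z \<in> F ` CA \<inter> eY ` topspace Y"
        then obtain c where c: "c \<in> CA" "z = F c" by blast
        have CAB: "CA \<subseteq> topspace BX" unfolding CA_def by (rule closure_of_subset_topspace)
        have cB: "c \<in> topspace BX" using CAB c(1) by (rule subsetD)
        have "F c \<in> eY ` topspace Y" using z c(2) by simp
        then have "c \<in> eX ` topspace X" using F1[OF cB] by simp
        then obtain x where x: "x \<in> topspace X" "c = eX x" by (rule imageE) simp
        have "x \<in> A" using embedding_closure[OF eXe A x(1)] c x unfolding CA_def by simp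
        then show "z \<in> eY ` f ` A" using c x Fe by simp
      qed
    qed
    have "closedin (subtopology CY (eY ` topspace Y)) (eY ` (f ` A))"
      unfolding eq closedin_subtopology using clF by blast
    moreover have "f ` A \<subseteq> topspace Y" using AX ft by blast
    ultimately show "closedin Y (f ` A)" using homeomorphic_map_closedness[OF hY] by blast
  qed
  have fpr: "proper_map X Y f"
    unfolding proper_map_def
  proof (intro conjI ballI fcl)
    fix y assume y: "y \<in> topspace Y"
    define Fib where "Fib = {c \<in> topspace BX. F c \<in> {eY y}}"
    have "closedin CY {eY y}" using closedin_Hausdorff_singleton[OF CYH eYt[OF y]] .
    then have "closedin BX Fib" unfolding Fib_def using closedin_continuous_map_preimage[OF Fc] by blast
    then have cF: "compactin BX Fib" using closedin_compact_space[OF BXc] by blast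
    have FibE: "Fib = eX ` {x \<in> topspace X. f x = y}"
    proof
      show "Fib \<subseteq> eX ` {x \<in> topspace X. f x = y}"
      proof
        fix c assume c: "c \<in> Fib"
        then have "c \<in> topspace BX" "F c = eY y" unfolding Fib_def by auto
        then obtain x where x: "x \<in> topspace X" "c = eX x" using F1 y by blast
        then have "eY (f x) = eY y" using Fe \<open>F c = eY y\<close> by simp
        then have "f x = y" using inj_onD[OF eYi _ ft[OF x(1)] y] by blast
        then show "c \<in> eX ` {x \<in> topspace X. f x = y}" using x by blast
      qed
      show "eX ` {x \<in> topspace X. f x = y} \<subseteq> Fib"
        unfolding Fib_def using Fe eXt by auto
    qed
    have "compactin (subtopology BX (eX ` topspace X)) (eX ` {x \<in> topspace X. f x = y})"
      unfolding compactin_subtopology using cF FibE by blast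
    moreover have sub: "{x \<in> topspace X. f x = y} \<subseteq> topspace X" by blast
    ultimately show "compactin X {x \<in> topspace X. f x = y}"
      using homeomorphic_map_compactness[OF hX sub] by simp
  qed
  define G where "G = {x \<in> topspace X. g (f x) = x}"
  have Gcl: "closedin X G"
    unfolding G_def
    by (rule closedin_continuous_maps_eq[OF HX continuous_map_compose[OF fc gc] continuous_map_id, unfolded o_def id_def])
  have GX: "G \<subseteq> topspace X" unfolding G_def by blast
  define C where "C = BX closure_of (eX ` G)"
  have CB: "C \<subseteq> topspace BX" unfolding C_def by (rule closure_of_subset_topspace)
  have FC: "topspace CY \<subseteq> F ` C"
  proof -
    have "compactin BX C"
      unfolding C_def by (rule closedin_compact_space[OF BXc closedin_closure_of])
    then have "compactin CY (F ` C)" using image_compactin Fc by blast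
    then have clF: "closedin CY (F ` C)" using compactin_imp_closedin CYH by blast
    have "eY ` topspace Y \<subseteq> F ` C"
    proof
      fix z assume "z \<in> eY ` topspace Y"
      then obtain y where y: "y \<in> topspace Y" "z = eY y" by blast
      have gG: "g y \<in> G" unfolding G_def using gt[OF y(1)] fg[OF y(1)] by simp
      have "eX (g y) \<in> C" unfolding C_def
        using gG GX eXt by (intro closure_of_subset[THEN subsetD]) auto
      moreover have "F (eX (g y)) = z" using Fe[OF gt[OF y(1)]] fg[OF y(1)] y(2) by simp
      ultimately show "z \<in> F ` C" by (metis image_eqI)
    qed
    then have "CY closure_of (eY ` topspace Y) \<subseteq> F ` C" using closure_of_minimal clF by blast
    then show ?thesis using CYd by simp
  qed
  have RXC: "RX \<subseteq> C"
  proof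
    fix r assume r: "r \<in> RX"
    then have "F r \<in> RY" using FR by blast
    then have "F r \<in> topspace CY" unfolding RY_def by blast
    then obtain c where c: "c \<in> C" "F c = F r" using FC by (metis imageE subsetD)
    have cB: "c \<in> topspace BX" using c(1) CB by blast
    have "c \<in> RX"
    proof (rule ccontr)
      assume "c \<notin> RX"
      then obtain x where x: "x \<in> topspace X" "c = eX x" using cB unfolding RX_def by blast
      then have "F r \<in> eY ` topspace Y" using c(2) Fe ft by (metis image_eqI)
      then show False using \<open>F r \<in> RY\<close> unfolding RY_def by blast
    qed
    then have "c = r" using inj_onD[OF FRi c(2)] r by blast
    then show "r \<in> C" using c(1) by simp
  qed
  have NXG: "non_locally_menger X \<subseteq> g ` topspace Y"
  proof
    fix x assume xN: "x \<in> non_locally_menger X"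
    then have x: "x \<in> topspace X" unfolding non_locally_menger_def by blast
    show "x \<in> g ` topspace Y"
    proof (rule ccontr)
      assume xg: "x \<notin> g ` topspace Y"
      have "x \<notin> G"
      proof
        assume "x \<in> G"
        then have "g (f x) = x" unfolding G_def by simp
        then show False using xg ft[OF x] by (metis image_eqI)
      qed
      then have xC: "eX x \<notin> C" using embedding_closure[OF eXe Gcl x] unfolding C_def by blast
      define Op where "Op = topspace BX - C"
      have Oo: "openin BX Op" unfolding Op_def C_def by (intro openin_diff openin_topspace closedin_closure_of)
      have OX: "Op \<subseteq> eX ` topspace X" using RXC unfolding Op_def RX_def by blast
      have "regular_space BX" using compact_Hausdorff_imp_regular_space[OF BXc BXH] .
      then have "neighbourhood_base_of (closedin BX) BX" using neighbourhood_base_of_closedin by blast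
      moreover have "eX x \<in> Op" unfolding Op_def using xC eXt[OF x] by blast
      then have "\<exists>W K. openin BX W \<and> closedin BX K \<and> eX x \<in> W \<and> W \<subseteq> K \<and> K \<subseteq> Op"
        using mp[OF spec[OF spec[OF \<open>neighbourhood_base_of (closedin BX) BX\<close>[unfolded neighbourhood_base_of], of Op], of "eX x"]] Oo
        by blast
      then obtain W K where W: "openin BX W" "closedin BX K" "eX x \<in> W" "W \<subseteq> K" "K \<subseteq> Op"
        by blast
      define U where "U = {z \<in> topspace X. eX z \<in> W}"
      define M where "M = {z \<in> topspace X. eX z \<in> K}"
      have Uo: "openin X U" unfolding U_def using openin_continuous_map_preimage[OF eXc W(1)] .
      have xU: "x \<in> U" unfolding U_def using x W(3) by blast
      have UM: "U \<subseteq> M" unfolding U_def M_def using W(4) by blast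
      have MX: "M \<subseteq> topspace X" unfolding M_def by blast
      have eM: "eX ` M = K" unfolding M_def using W(5) OX by blast
      have "compactin BX K" using closedin_compact_space[OF BXc W(2)] .
      then have "compactin (subtopology BX (eX ` topspace X)) (eX ` M)"
        unfolding compactin_subtopology using eM W(5) OX by blast
      then have "compactin X M" using homeomorphic_map_compactness[OF hX MX] by simp
      then have "menger_space (subtopology X M)" using compact_menger compact_space_subtopology by blast
      then have "locally_menger_at X x" unfolding locally_menger_at_def using Uo xU UM MX by blast
      then show False using xN unfolding non_locally_menger_def by blast
    qed
  qed
  have NXY: "f x \<in> non_locally_menger Y" if xN: "x \<in> non_locally_menger X" for x
  proof -
    have x: "x \<in> topspace X" using xN unfolding non_locally_menger_def by blast
    have "\<not> locally_menger_at Y (f x)"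
    proof
      assume "locally_menger_at Y (f x)"
      then obtain V M where VM: "openin Y V" "f x \<in> V" "V \<subseteq> M" "M \<subseteq> topspace Y"
        "menger_space (subtopology Y M)" unfolding locally_menger_at_def by blast
      define U where "U = {z \<in> topspace X. f z \<in> V}"
      define M' where "M' = {z \<in> topspace X. f z \<in> M}"
      have "proper_map (subtopology X M') (subtopology Y M) f"
        using proper_map_restriction[OF fpr] unfolding M'_def by blast
      then have "menger_space (subtopology X M')" using menger_proper_preimage VM(5) by blast
      moreover have "openin X U" unfolding U_def using openin_continuous_map_preimage[OF fc VM(1)] .
      moreover have "x \<in> U" "U \<subseteq> M'" "M' \<subseteq> topspace X" unfolding U_def M'_def using x VM by auto
      ultimately have "locally_menger_at X x" unfolding locally_menger_at_def by blast
      then show False using xN unfolding non_locally_menger_def by blast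
    qed
    then show ?thesis unfolding non_locally_menger_def using ft[OF x] by blast
  qed
  have NYX: "g y \<in> non_locally_menger X" if yN: "y \<in> non_locally_menger Y" for y
  proof -
    have y: "y \<in> topspace Y" using yN unfolding non_locally_menger_def by blast
    have "\<not> locally_menger_at X (g y)"
    proof
      assume "locally_menger_at X (g y)"
      then obtain U M where UM: "openin X U" "g y \<in> U" "U \<subseteq> M" "M \<subseteq> topspace X"
        "menger_space (subtopology X M)" unfolding locally_menger_at_def by blast
      define V where "V = {z \<in> topspace Y. g z \<in> U}"
      have Vo: "openin Y V" unfolding V_def using openin_continuous_map_preimage[OF gc UM(1)] .
      have yV: "y \<in> V" unfolding V_def using y UM(2) by blast
      have VM: "V \<subseteq> f ` M"
      proof
        fix z assume "z \<in> V"
        then have "z \<in> topspace Y" "g z \<in> M" unfolding V_def using UM(3) by auto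
        then show "z \<in> f ` M" using fg by (metis image_eqI)
      qed
      have MY: "f ` M \<subseteq> topspace Y" using UM(4) ft by blast
      have "continuous_map (subtopology X M) (subtopology Y (f ` M)) f"
        using continuous_map_from_subtopology[OF fc] UM(4)
        by (simp add: continuous_map_in_subtopology Int_absorb1)
      moreover have "f ` topspace (subtopology X M) = topspace (subtopology Y (f ` M))"
        using UM(4) MY by (simp add: Int_absorb1 Int_absorb2)
      ultimately have "menger_space (subtopology Y (f ` M))" using menger_image UM(5) by blast
      then have "locally_menger_at Y y" unfolding locally_menger_at_def using Vo yV VM MY by blast
      then show False using yN unfolding non_locally_menger_def by blast
    qed
    then show ?thesis unfolding non_locally_menger_def using gt[OF y] by blast
  qed
  have NXt: "topspace (subtopology X (non_locally_menger X)) = non_locally_menger X"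
    unfolding non_locally_menger_def by auto
  have NYt: "topspace (subtopology Y (non_locally_menger Y)) = non_locally_menger Y"
    unfolding non_locally_menger_def by auto
  have "homeomorphic_maps (subtopology X (non_locally_menger X)) (subtopology Y (non_locally_menger Y)) f g"
    unfolding homeomorphic_maps_def
  proof (intro conjI ballI)
    show "continuous_map (subtopology X (non_locally_menger X)) (subtopology Y (non_locally_menger Y)) f"
      unfolding continuous_map_in_subtopology NXt
      using continuous_map_from_subtopology[OF fc] NXY by blast
    show "continuous_map (subtopology Y (non_locally_menger Y)) (subtopology X (non_locally_menger X)) g"
      unfolding continuous_map_in_subtopology NYt
      using continuous_map_from_subtopology[OF gc] NYX by blast
  next
    fix x assume "x \<in> topspace (subtopology X (non_locally_menger X))"
    then have "x \<in> non_locally_menger X" using NXt by simp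
    then obtain y where "y \<in> topspace Y" "x = g y" using NXG by blast
    then show "g (f x) = x" using fg by simp
  next
    fix y assume "y \<in> topspace (subtopology Y (non_locally_menger Y))"
    then have "y \<in> topspace Y" using NYt unfolding non_locally_menger_def by auto
    then show "f (g y) = y" using fg by simp
  qed
  then show ?thesis using homeomorphic_map_maps by blast
qed

end
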